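(* Let $M$ be a $*$-left Ehresmann monoid with basis $H$, and suppose $m\in M$ has $H$-canonical form of length $n$. If $m=h_1\cdots h_n$ with $h_i\in H$ for $1\le i\le n$, then \[m=\big(h_1(h_2\cdots h_n)^+\big)\big(h_2(h_3\cdots h_n)^+\big)\cdots\big(h_{n-1}h_n^+\big)h_n\] is the $H$-canonical form of $m$ (in particular each displayed factor lies in $H$).
   Context: A $*$-left Ehresmann monoid is a monoid $M$ with unary operations $+,*$ such that $x^+x=x$, $(x^+y^+)^+=x^+y^+$, $x^+y^+=y^+x^+$, $(xy)^+=(xy^+)^+$, $xx^*=x$, $(x^* )^*=x^*$, $x^*y^*=y^*x^*$, $(xy^* )^*y^*=(xy^* )^*$, $(x^* )^+=x^*$, $(x^+)^*=x^+$. Projections: $E=\{a^+\}=\{a^*\}$, ordered by $e\le f$ iff $ef=e$; $\sigma$ is the least monoid congruence containing $E\times E$. $H\subseteq M$ is atomic if: (H1) $E\subseteq H$; (H2) $h\in H,e\in E$ imply $he\in H$ and $(he)^*=h^*e$; (H3) if $h\in H$, $k\in H\setminus E$, $h^*\ge k^+$ then $hk\in H$ and $(hk)^*=k^*$; (H4) every $m\in M$ is $\sigma$-related to some $h\in H$; (H5) if $h,k,w\in H$, $hk\,\sigma\,w$ and $k^*=w^*$, then some $u\in H$ has $u\,\sigma\,h$ and $u^*\ge k^+$. An expression $m=h_1\cdots h_n$ ($n\ge1$, $h_i\in H$) is in $H$-canonical form if $h_i^*<h_{i+1}^+$ for $1\le i<n$ and $h_i\notin E$ for $2\le i\le n$.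 $M$ has $H$-canonical forms if every element has exactly one expression in $H$-canonical form. $H$ is a basis of $M$ if $H$ generates $M$ as a semigroup, $H$ is atomic and $M$ has $H$-canonical forms. *)

theory Defs
  imports Main
begin

text \<open>A monoid M is modelled as the whole of a type of class monoid_mult;
  the unary operations + and * are the functions pl and st.\<close>

definition star_left_ehresmann :: "('a::monoid_mult \<Rightarrow> 'a) \<Rightarrow> ('a \<Rightarrow> 'a) \<Rightarrow> bool" where
  "star_left_ehresmann pl st \<longleftrightarrow>
     (\<forall>x. pl x * x = x) \<and>
     (\<forall>x y. pl (pl x * pl y) = pl x * pl y) \<and>
     (\<forall>x y. pl x * pl y = pl y * pl x) \<and>
     (\<forall>x y. pl (x * y) = pl (x * pl y)) \<and>
     (\<forall>x. x * st x = x) \<and>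
     (\<forall>x. st (st x) = st x) \<and>
     (\<forall>x y. st x * st y = st y * st x) \<and>
     (\<forall>x y. st (x * st y) * st y = st (x * st y)) \<and>
     (\<forall>x. pl (st x) = st x) \<and>
     (\<forall>x. st (pl x) = pl x)"

definition projections :: "('a::monoid_mult \<Rightarrow> 'a) \<Rightarrow> 'a set" where
  "projections pl = range pl"

definition proj_le :: "'a::monoid_mult \<Rightarrow> 'a \<Rightarrow> bool" where
  "proj_le e f \<longleftrightarrow> e * f = e"

definition proj_less :: "'a::monoid_mult \<Rightarrow> 'a \<Rightarrow> bool" where
  "proj_less e f \<longleftrightarrow> proj_le e f \<and> e \<noteq> f"

definition monoid_congruence :: "('a::monoid_mult \<times> 'a) set \<Rightarrow> bool" where
  "monoid_congruence R \<longleftrightarrow> equiv UNIV R \<and>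
     (\<forall>a b c. (a, b) \<in> R \<longrightarrow> (c * a, c * b) \<in> R \<and> (a * c, b * c) \<in> R)"

definition sigma :: "('a::monoid_mult \<Rightarrow> 'a) \<Rightarrow> ('a \<times> 'a) set" where
  "sigma pl = \<Inter>{R. monoid_congruence R \<and> projections pl \<times> projections pl \<subseteq> R}"

definition atomic :: "('a::monoid_mult \<Rightarrow> 'a) \<Rightarrow> ('a \<Rightarrow> 'a) \<Rightarrow> 'a set \<Rightarrow> bool" where
  "atomic pl st H \<longleftrightarrow>
     projections pl \<subseteq> H \<and>
     (\<forall>h\<in>H. \<forall>e\<in>projections pl. h * e \<in> H \<and> st (h * e) = st h * e) \<and>
     (\<forall>h\<in>H. \<forall>k\<in>H - projections pl. proj_le (pl k) (st h) \<longrightarrow>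
         h * k \<in> H \<and> st (h * k) = st k) \<and>
     (\<forall>m. \<exists>h\<in>H. (m, h) \<in> sigma pl) \<and>
     (\<forall>h\<in>H. \<forall>k\<in>H. \<forall>w\<in>H. (h * k, w) \<in> sigma pl \<and> st k = st w \<longrightarrow>
         (\<exists>u\<in>H. (u, h) \<in> sigma pl \<and> proj_le (pl k) (st u)))"

definition canonical_expr :: "('a::monoid_mult \<Rightarrow> 'a) \<Rightarrow> ('a \<Rightarrow> 'a) \<Rightarrow> 'a set \<Rightarrow> 'a list \<Rightarrow> bool" where
  "canonical_expr pl st H hs \<longleftrightarrow>
     hs \<noteq> [] \<and> set hs \<subseteq> H \<and>
     (\<forall>i. Suc i < length hs \<longrightarrow> proj_less (st (hs ! i)) (pl (hs ! Suc i))) \<and>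
     (\<forall>i. 1 \<le> i \<and> i < length hs \<longrightarrow> hs ! i \<notin> projections pl)"

definition has_canonical_forms :: "('a::monoid_mult \<Rightarrow> 'a) \<Rightarrow> ('a \<Rightarrow> 'a) \<Rightarrow> 'a set \<Rightarrow> bool" where
  "has_canonical_forms pl st H \<longleftrightarrow>
     (\<forall>m. \<exists>!hs. canonical_expr pl st H hs \<and> prod_list hs = m)"

definition generates_semigroup :: "'a::monoid_mult set \<Rightarrow> bool" where
  "generates_semigroup H \<longleftrightarrow> (\<forall>m. \<exists>hs. hs \<noteq> [] \<and> set hs \<subseteq> H \<and> prod_list hs = m)"

definition is_basis :: "('a::monoid_mult \<Rightarrow> 'a) \<Rightarrow> ('a \<Rightarrow> 'a) \<Rightarrow> 'a set \<Rightarrow> bool" where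
  "is_basis pl st H \<longleftrightarrow> generates_semigroup H \<and> atomic pl st H \<and> has_canonical_forms pl st H"

text \<open>The displayed expression (h_1 (h_2\<cdots>h_n)^+)(h_2 (h_3\<cdots>h_n)^+)\<cdots>(h_{n-1} h_n^+) h_n.\<close>
definition plus_normalize :: "('a::monoid_mult \<Rightarrow> 'a) \<Rightarrow> 'a list \<Rightarrow> 'a list" where
  "plus_normalize pl hs =
     map (\<lambda>i. hs ! i * pl (prod_list (drop (Suc i) hs))) [0..<length hs - 1] @ [last hs]"

end

theory Submission
  imports Defs
begin

lemma sle_facts:
  assumes "star_left_ehresmann pl st"
  shows "pl x * x = x" "pl (pl x * pl y) = pl x * pl y" "pl x * pl y = pl y * pl x"
    "pl (x * y) = pl (x * pl y)" "x * st x = x" "pl (st x) = st x" "st (pl x) = pl x"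
  using assms unfolding star_left_ehresmann_def by auto

lemma pl_one:
  assumes "star_left_ehresmann pl st" shows "pl (1::'a::monoid_mult) = 1"
  using sle_facts(1)[OF assms, of 1] by simp

lemma pl_pl:
  assumes "star_left_ehresmann pl st" shows "pl (pl x) = pl x"
  using sle_facts(2)[OF assms, of x 1] pl_one[OF assms] by simp

lemma pl_idem:
  assumes "star_left_ehresmann pl st" shows "pl x * pl x = pl x"
  using sle_facts(1)[OF assms, of "pl x"] pl_pl[OF assms] by simp

lemma proj_pl:
  assumes "star_left_ehresmann pl st" "e \<in> projections pl" shows "pl e = e" "st e = e"
  using assms pl_pl[OF assms(1)] sle_facts(7)[OF assms(1)] unfolding projections_def by auto

lemma st_proj: "star_left_ehresmann pl st \<Longrightarrow> st x \<in> projections pl"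
  unfolding projections_def using sle_facts(6) by (metis rangeI)

lemma pl_proj: "pl x \<in> projections pl"
  unfolding projections_def by auto

lemma allnat: "(\<forall>i::nat. Q i) = (Q 0 \<and> (\<forall>i. Q (Suc i)))"
  by (metis not0_implies_Suc)

lemma canon_single: "k \<in> H \<Longrightarrow> canonical_expr pl st H [k]"
  unfolding canonical_expr_def by auto

lemma canon_cons:
  "canonical_expr pl st H (a # b # rest) \<longleftrightarrow>
     a \<in> H \<and> proj_less (st a) (pl b) \<and> b \<notin> projections pl \<and> canonical_expr pl st H (b # rest)"
proof -
  have 1: "(\<forall>i. Suc i < length (a # b # rest) \<longrightarrow> proj_less (st ((a # b # rest) ! i)) (pl ((a # b # rest) ! Suc i)))
     = (proj_less (st a) (pl b) \<and> (\<forall>i. Suc i < length (b # rest) \<longrightarrow> proj_less (st ((b # rest) ! i)) (pl ((b # rest) ! Suc i))))"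
    by (subst allnat) simp
  have 2: "(\<forall>i. 1 \<le> i \<and> i < length (a # b # rest) \<longrightarrow> (a # b # rest) ! i \<notin> projections pl)
     = (b \<notin> projections pl \<and> (\<forall>i. 1 \<le> i \<and> i < length (b # rest) \<longrightarrow> (b # rest) ! i \<notin> projections pl))"
    proof
    assume h: "\<forall>i. 1 \<le> i \<and> i < length (a # b # rest) \<longrightarrow> (a # b # rest) ! i \<notin> projections pl"
    show "b \<notin> projections pl \<and> (\<forall>i. 1 \<le> i \<and> i < length (b # rest) \<longrightarrow> (b # rest) ! i \<notin> projections pl)"
    proof (intro conjI allI impI)
      show "b \<notin> projections pl" using h[rule_format, of 1] by simp
      fix i assume "1 \<le> i \<and> i < length (b # rest)"
      then show "(b # rest) ! i \<notin> projections pl" using h[rule_format, of "Suc i"] by simp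
    qed
  next
    assume h: "b \<notin> projections pl \<and> (\<forall>i. 1 \<le> i \<and> i < length (b # rest) \<longrightarrow> (b # rest) ! i \<notin> projections pl)"
    show "\<forall>i. 1 \<le> i \<and> i < length (a # b # rest) \<longrightarrow> (a # b # rest) ! i \<notin> projections pl"
    proof (intro allI impI)
      fix i assume i: "1 \<le> i \<and> i < length (a # b # rest)"
      then obtain j where j: "i = Suc j" by (cases i) auto
      show "(a # b # rest) ! i \<notin> projections pl"
      proof (cases j)
        case 0 then show ?thesis using h j by simp
      next
        case (Suc j') then show ?thesis using h[THEN conjunct2, rule_format, of j] i j by simp
      qed
    qed
  qed
  show ?thesis unfolding canonical_expr_def 1 2 by auto
qed

lemma canon_hd:
  "canonical_expr pl st H (k # rest) \<Longrightarrow> k \<in> H"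
  unfolding canonical_expr_def by auto

lemma canon_pl:
  assumes S: "star_left_ehresmann pl st"
  shows "canonical_expr pl st H (k # rest) \<Longrightarrow> pl (prod_list (k # rest)) = pl k"
proof (induction rest arbitrary: k)
  case Nil
  then show ?case by simp
next
  case (Cons b rest)
  then have c: "proj_less (st k) (pl b)" "canonical_expr pl st H (b # rest)"
    using canon_cons by blast+
  have "k * pl b = k"
    using c(1) sle_facts(5)[OF S, of k] unfolding proj_less_def proj_le_def
    by (metis mult.assoc)
  then show ?case using Cons.IH[OF c(2)] sle_facts(4)[OF S, of k "prod_list (b # rest)"]
    by simp
qed


lemma atomic_facts:
  assumes "atomic pl st H"
  shows "projections pl \<subseteq> H"
    "\<And>h e. h \<in> H \<Longrightarrow> e \<in> projections pl \<Longrightarrow> h * e \<in> H \<and> st (h * e) = st h * e"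
    "\<And>h k. h \<in> H \<Longrightarrow> k \<in> H \<Longrightarrow> k \<notin> projections pl \<Longrightarrow> proj_le (pl k) (st h) \<Longrightarrow>
         h * k \<in> H \<and> st (h * k) = st k"
  using assms unfolding atomic_def by blast+

lemma canon_tail_change:
  assumes "canonical_expr pl st H (k # rest)" "k' \<in> H" "st k' = st k"
  shows "canonical_expr pl st H (k' # rest)"
proof (cases rest)
  case Nil then show ?thesis using assms canon_single by metis
next
  case (Cons b r) then show ?thesis using assms canon_cons by metis
qed

lemma step:
  assumes S: "star_left_ehresmann pl st" and A: "atomic pl st H"
    and h: "h \<in> H" and C: "canonical_expr pl st H (k # rest)"
  shows "\<exists>C'. canonical_expr pl st H C' \<and> prod_list C' = h * prod_list (k # rest)
     \<and> length C' \<le> Suc (length (k # rest))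
     \<and> (length C' = Suc (length (k # rest)) \<longrightarrow> C' = (h * pl k) # k # rest)"
proof -
  have kH: "k \<in> H" using canon_hd[OF C] .
  define e where "e = pl k"
  have eE: "e \<in> projections pl" unfolding e_def by (rule pl_proj)
  have g: "h * e \<in> H" "st (h * e) = st h * e" using atomic_facts(2)[OF A h eE] by auto
  have comm: "st h * e = e * st h"
    using sle_facts(3)[OF S, of "st h" k] sle_facts(6)[OF S, of h] unfolding e_def by simp
  have ee: "e * e = e" unfolding e_def using pl_idem[OF S] .
  show ?thesis
  proof (cases "proj_le e (st h)")
    case True
    have hk: "h * k \<in> H \<and> st (h * k) = st k"
    proof (cases "k \<in> projections pl")
      case False
      then show ?thesis using atomic_facts(3)[OF A h kH] True unfolding e_def by blast
    next
      case kE: True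
      have "k = e" using proj_pl(1)[OF S kE] unfolding e_def by simp
      moreover have "st k = k" using proj_pl(2)[OF S kE] .
      ultimately show ?thesis using g True comm unfolding proj_le_def by simp
    qed
    show ?thesis
      by (rule exI[of _ "(h * k) # rest"]) (use canon_tail_change[OF C] hk in \<open>auto simp: mult.assoc\<close>)
  next
    case False
    have less: "proj_less (st (h * e)) e"
      using False g(2) ee comm unfolding proj_less_def proj_le_def by (metis mult.assoc)
    show ?thesis
    proof (cases "k \<in> projections pl")
      case kNE: False
      have "canonical_expr pl st H ((h * e) # k # rest)"
        using canon_cons C g(1) less kNE unfolding e_def by blast
      moreover have "h * e * prod_list (k # rest) = h * prod_list (k # rest)"
        using sle_facts(1)[OF S, of k] unfolding e_def by (metis mult.assoc prod_list.Cons)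
      ultimately show ?thesis unfolding e_def by (intro exI[of _ "(h * e) # k # rest"]) (auto simp: e_def)
    next
      case kE: True
      have ke: "k = e" using proj_pl(1)[OF S kE] unfolding e_def by simp
      have canon: "canonical_expr pl st H ((h * e) # rest)"
      proof (cases rest)
        case Nil then show ?thesis using canon_single g(1) by metis
      next
        case (Cons b r)
        have c: "proj_less (st k) (pl b)" "b \<notin> projections pl" "canonical_expr pl st H (b # r)"
          using C Cons canon_cons by blast+
        have stk: "st k = e" using proj_pl(2)[OF S kE] ke by simp
        have pc: "pl b * e = e * pl b"
          using sle_facts(3)[OF S, of b k] unfolding e_def by simp
        have "proj_less (st (h * e)) (pl b)"
          using c(1) g(2) stk pc ee unfolding proj_less_def proj_le_def
          by (metis mult.assoc)
        then show ?thesis using Cons c canon_cons g(1) by blast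
      qed
      show ?thesis
        by (rule exI[of _ "(h * e) # rest"]) (use canon ke ee in \<open>auto simp: mult.assoc\<close>)
    qed
  qed
qed


lemma pn_single: "plus_normalize pl [h] = [h]"
  unfolding plus_normalize_def by simp

lemma pn_cons:
  assumes "t \<noteq> []"
  shows "plus_normalize pl (h # t) = (h * pl (prod_list t)) # plus_normalize pl t"
proof -
  have "[0..<length (h # t) - 1] = 0 # map Suc [0..<length t - 1]"
    using assms by (simp add: upt_conv_Cons map_Suc_upt del: upt_Suc)
  then show ?thesis using assms unfolding plus_normalize_def by (simp add: comp_def)
qed

lemma reduce:
  assumes S: "star_left_ehresmann pl st" and A: "atomic pl st H"
  shows "hs \<noteq> [] \<Longrightarrow> set hs \<subseteq> H \<Longrightarrow> \<exists>C. canonical_expr pl st H C \<and> prod_list C = prod_list hs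
     \<and> length C \<le> length hs \<and> (length C = length hs \<longrightarrow> C = plus_normalize pl hs)"
proof (induction hs)
  case Nil then show ?case by simp
next
  case (Cons h t)
  show ?case
  proof (cases "t = []")
    case True
    then show ?thesis using Cons.prems canon_single
      by (intro exI[of _ "[h]"]) (auto simp: pn_single)
  next
    case False
    then obtain C where C: "canonical_expr pl st H C" "prod_list C = prod_list t"
      "length C \<le> length t" "length C = length t \<longrightarrow> C = plus_normalize pl t"
      using Cons by auto
    then obtain k rest where kr: "C = k # rest" unfolding canonical_expr_def by (cases C) auto
    have hH: "h \<in> H" using Cons.prems by auto
    obtain C' where C': "canonical_expr pl st H C'" "prod_list C' = h * prod_list (k # rest)"
      "length C' \<le> Suc (length (k # rest))"
      "length C' = Suc (length (k # rest)) \<longrightarrow> C' = (h * pl k) # k # rest"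
      using step[OF S A hH C(1)[unfolded kr]] by blast
    have plk: "pl k = pl (prod_list t)"
      using canon_pl[OF S C(1)[unfolded kr]] C(2) kr by simp
    show ?thesis
    proof (intro exI[of _ C'] conjI impI)
      show "canonical_expr pl st H C'" by fact
      show "prod_list C' = prod_list (h # t)" using C' C kr by simp
      show "length C' \<le> length (h # t)" using C' C kr by simp
      assume "length C' = length (h # t)"
      then have l: "length C' = Suc (length (k # rest))" "length C = length t"
        using C' C kr by auto
      show "C' = plus_normalize pl (h # t)"
        using C'(4) l C(4) kr plk pn_cons[OF False] by simp
    qed
  qed
qed

theorem mainTheorem10:
  fixes pl st :: "'a::monoid_mult \<Rightarrow> 'a" and H :: "'a set" and m :: 'a
    and n :: nat and cs hs :: "'a list"
  assumes "star_left_ehresmann pl st"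
    and "is_basis pl st H"
    and "canonical_expr pl st H cs" and "prod_list cs = m" and "length cs = n"
    and "length hs = n" and "set hs \<subseteq> H" and "prod_list hs = m"
  shows "canonical_expr pl st H (plus_normalize pl hs) \<and> prod_list (plus_normalize pl hs) = m"
proof -
  have A: "atomic pl st H" and U: "has_canonical_forms pl st H"
    using assms(2) unfolding is_basis_def by auto
  have ne: "hs \<noteq> []" using assms(3,5,6) unfolding canonical_expr_def by auto
  obtain C where C: "canonical_expr pl st H C" "prod_list C = prod_list hs"
      "length C \<le> length hs" "length C = length hs \<longrightarrow> C = plus_normalize pl hs"
    using reduce[OF assms(1) A ne assms(7)] by blast
  have "C = cs"
    using U C(1,2) assms(3,4,8) unfolding has_canonical_forms_def by metis
  then have "C = plus_normalize pl hs" using C(4) assms(5,6) by simp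
  then show ?thesis using C assms(8) by simp
qed

end
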